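(* Let $\mathbf{Z}\in\mathbb{R}^{m\times n}$ ($m\ge n$) have SVD $\mathbf{Z}=\bar{\mathbf{U}}\,\mathrm{Diag}(\sigma(\mathbf{Z}))\bar{\mathbf{V}}^\top$ with $\bar{\mathbf{U}}\in\mathbb{R}^{m\times n}$, $\bar{\mathbf{V}}\in\mathbb{R}^{n\times n}$ having orthonormal columns and $\sigma(\mathbf{Z})=(\sigma_1(\mathbf{Z}),\dots,\sigma_n(\mathbf{Z}))$, $\sigma_1(\mathbf{Z})\ge\cdots\ge\sigma_n(\mathbf{Z})\ge0$, and let $0<\lambda\le\sigma_1(\mathbf{Z})$. Consider the vector problem $$\min_{\mathbf{s}\in\mathbb{R}^n}\ \tfrac12\|\mathbf{s}-\sigma(\mathbf{Z})\|_2^2+\lambda\big(\|\mathbf{s}\|_1-\|\mathbf{s}\|_2\big)$$ and the matrix problem $$\min_{\mathbf{X}\in\mathbb{R}^{m\times n}}\ \tfrac12\|\mathbf{X}-\mathbf{Z}\|_F^2+\lambda\big(\|\mathbf{X}\|_*-\|\mathbf{X}\|_F\big).$$ Then the vector problem has a minimizer $\tilde{\mathbf{s}}$ with $\tilde s_1\ge\tilde s_2\ge\cdots\ge\tilde s_n\ge0$, and for every such minimizer, $\bar{\mathbf{U}}\,\mathrm{Diag}(\tilde{\mathbf{s}})\bar{\mathbf{V}}^\top$ is a minimizer of the matrix problem; moreover the two problems have the same optimal value.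
   Context: $\|\mathbf{X}\|_*$ is the nuclear norm (sum of singular values) and $\|\mathbf{X}\|_F$ the Frobenius norm. The regularizer $r_{\text{NNFN}}(\mathbf{X})=\|\mathbf{X}\|_*-\|\mathbf{X}\|_F$ is called the "nuclear norm minus Frobenius norm" (NNFN) regularizer, and $\|\mathbf{s}\|_1-\|\mathbf{s}\|_2$ is the $\ell_{1\text{-}2}$ penalty; the two problems are the proximal problems of $\lambda r_{\text{NNFN}}$ at $\mathbf{Z}$ and of $\lambda\|\cdot\|_{1\text{-}2}$ at $\sigma(\mathbf{Z})$. *)

theory Defs
  imports "HOL-Analysis.Analysis"
begin

definition Diag :: "real^'n \<Rightarrow> real^'n^'n" where
  "Diag s = (\<chi> i j. if i = j then s $ i else 0)"

definition frob_norm :: "real^'n^'m \<Rightarrow> real" where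
  "frob_norm X = sqrt (\<Sum>i\<in>UNIV. \<Sum>j\<in>UNIV. (X $ i $ j)^2)"

definition l1_norm :: "real^'n \<Rightarrow> real" where
  "l1_norm s = (\<Sum>i\<in>UNIV. \<bar>s $ i\<bar>)"

definition l2_norm :: "real^'n \<Rightarrow> real" where
  "l2_norm s = sqrt (\<Sum>i\<in>UNIV. (s $ i)^2)"

definition is_svd :: "real^'n^'m \<Rightarrow> real^'n^'m \<Rightarrow> real^'n \<Rightarrow> real^'n^'n \<Rightarrow> bool" where
  "is_svd X U s V \<longleftrightarrow> transpose U ** U = mat 1 \<and> transpose V ** V = mat 1
     \<and> (\<forall>i. 0 \<le> s $ i) \<and> X = U ** Diag s ** transpose V"

text \<open>Nuclear norm: the sum of the singular values (well defined since the
  multiset of singular values does not depend on the chosen SVD).\<close>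
definition nuclear_norm :: "real^'n^'m \<Rightarrow> real" where
  "nuclear_norm X = (SOME t. \<exists>U s V. is_svd X U s V \<and> t = (\<Sum>i\<in>UNIV. s $ i))"

definition vec_obj :: "real \<Rightarrow> real^'n \<Rightarrow> real^'n \<Rightarrow> real" where
  "vec_obj lam z s = (1/2) * (l2_norm (s - z))^2 + lam * (l1_norm s - l2_norm s)"

definition mat_obj :: "real \<Rightarrow> real^'n^'m \<Rightarrow> real^'n^'m \<Rightarrow> real" where
  "mat_obj lam Z X = (1/2) * (frob_norm (X - Z))^2 + lam * (nuclear_norm X - frob_norm X)"

end

theory Submission
  imports Defs
begin

definition outer :: "real^'m \<Rightarrow> real^'n \<Rightarrow> real^'n^'m" where
  "outer p q = (\<chi> a b. p$a * q$b)"

lemma frob_eq_norm: "frob_norm X = norm X"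
  by (simp add: frob_norm_def norm_eq_sqrt_inner inner_vec_def power2_eq_square)

lemma l2_eq_norm: "l2_norm s = norm s"
  by (simp add: l2_norm_def norm_eq_sqrt_inner inner_vec_def power2_eq_square)

lemma svd_repr:
  fixes P :: "real^'n^'m" and Q :: "real^'n^'k"
  shows "P ** Diag x ** transpose Q = (\<Sum>i\<in>UNIV. x$i *\<^sub>R outer (column i P) (column i Q))"
proof -
  have 1: "(P ** Diag x) $ a $ k = P$a$k * x$k" for a k
    by (simp add: matrix_matrix_mult_def Diag_def if_distrib[of "\<lambda>t. P$a$_ * t"] sum.delta cong: if_cong)
  have 2: "(P ** Diag x ** transpose Q) $ a $ b = (\<Sum>k\<in>UNIV. P$a$k * x$k * Q$b$k)" for a b
    by (simp add: matrix_matrix_mult_def[of "P ** Diag x"] 1 transpose_def)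
  show ?thesis
    by (simp add: vec_eq_iff 2 outer_def column_def sum_component mult.commute mult.left_commute)
qed

lemma inner_outer: "outer p q \<bullet> outer u v = (p \<bullet> u) * (q \<bullet> v)"
  by (simp add: outer_def inner_vec_def sum_product sum_distrib_left sum_distrib_right mult.commute mult.left_commute; subst sum.swap; simp)

lemma inner_repr:
  "(\<Sum>i\<in>I. a i *\<^sub>R outer (p i) (q i)) \<bullet> (\<Sum>j\<in>J. b j *\<^sub>R outer (u j) (v j))
   = (\<Sum>i\<in>I. \<Sum>j\<in>J. a i * b j * ((p i \<bullet> u j) * (q i \<bullet> v j)))"
  unfolding inner_sum_left by (simp add: inner_sum_right inner_outer mult.assoc sum_distrib_left mult.left_commute)

lemma orth_cols:
  fixes P :: "real^'n^'m"
  assumes "transpose P ** P = mat 1"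
  shows "column i P \<bullet> column j P = (if i = j then 1 else 0)"
proof -
  have "(transpose P ** P) $ i $ j = column i P \<bullet> column j P"
    by (simp add: matrix_matrix_mult_def transpose_def column_def inner_vec_def)
  then show ?thesis using assms by (simp add: mat_def)
qed

lemma bessel:
  fixes u :: "'i \<Rightarrow> 'a::real_inner"
  assumes "finite I" "\<And>i j. i \<in> I \<Longrightarrow> j \<in> I \<Longrightarrow> u i \<bullet> u j = (if i = j then 1 else 0)"
  shows "(\<Sum>j\<in>I. (p \<bullet> u j)^2) \<le> p \<bullet> p"
proof -
  define w where "w = (\<Sum>j\<in>I. (p \<bullet> u j) *\<^sub>R u j)"
  have pw: "p \<bullet> w = (\<Sum>j\<in>I. (p \<bullet> u j)^2)"
    by (simp add: w_def inner_sum_right power2_eq_square)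
  have ww: "w \<bullet> w = (\<Sum>j\<in>I. (p \<bullet> u j)^2)"
  proof -
    have "w \<bullet> w = (\<Sum>i\<in>I. \<Sum>j\<in>I. (p \<bullet> u i) * (p \<bullet> u j) * (u i \<bullet> u j))"
      unfolding w_def inner_sum_left by (simp add: inner_sum_right mult.assoc sum_distrib_left mult.left_commute)
    also have "\<dots> = (\<Sum>i\<in>I. (p \<bullet> u i) * (p \<bullet> u i))"
    proof (rule sum.cong[OF refl])
      fix i assume i: "i \<in> I"
      have "(\<Sum>j\<in>I. (p \<bullet> u i) * (p \<bullet> u j) * (u i \<bullet> u j)) = (\<Sum>j\<in>I. if j = i then (p \<bullet> u i) * (p \<bullet> u i) else 0)"
        using assms(2)[OF i] by (intro sum.cong) auto
      then show "(\<Sum>j\<in>I. (p \<bullet> u i) * (p \<bullet> u j) * (u i \<bullet> u j)) = (p \<bullet> u i) * (p \<bullet> u i)"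
        using i assms(1) by simp
    qed
    finally show ?thesis by (simp add: power2_eq_square)
  qed
  have "0 \<le> (p - w) \<bullet> (p - w)" by simp
  also have "\<dots> = p \<bullet> p - 2 * (p \<bullet> w) + w \<bullet> w"
    by (simp add: inner_diff_left inner_diff_right inner_commute)
  finally show ?thesis using pw ww by linarith
qed

lemma sort_perm:
  fixes f :: "'n::{finite,linorder} \<Rightarrow> real"
  shows "\<exists>\<pi>::'n\<Rightarrow>'n. bij \<pi> \<and> (\<forall>i j. i \<le> j \<longrightarrow> f (\<pi> j) \<le> f (\<pi> i))"
proof -
  obtain xs :: "'n list" where xs: "distinct xs" "set xs = UNIV"
    using finite_distinct_list[of "UNIV :: 'n set"] by auto
  define L where "L = sort_key (\<lambda>i. - f i) xs"
  have L: "distinct L" "set L = UNIV" "sorted (map (\<lambda>i. - f i) L)"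
    using xs by (auto simp: L_def)
  have lenL: "length L = CARD('n)"
    using L distinct_card by fastforce
  define r where "r i = card {j::'n. j < i}" for i
  have rlt: "r i < r i'" if "i < i'" for i i'
  proof -
    have "{j. j < i} \<subset> {j. j < i'}" using that by auto
    then show ?thesis unfolding r_def by (intro psubset_card_mono) auto
  qed
  have rmono: "r i \<le> r j" if "i \<le> j" for i j
  proof (cases "i = j")
    case False then have "i < j" using that by simp
    then show ?thesis using rlt[of i j] by simp
  qed simp
  have rbound: "r i < CARD('n)" for i
  proof -
    have "{j. j < i} \<subset> UNIV" by auto
    then show ?thesis unfolding r_def by (intro psubset_card_mono) auto
  qed
  have rinj: "inj r"
    by (metis linorder_inj_onI' rlt less_imp_neq)
  have rbij: "bij_betw r UNIV {..<CARD('n)}"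
  proof -
    have "r ` UNIV \<subseteq> {..<CARD('n)}" using rbound by auto
    moreover have "card (r ` UNIV) = card {..<CARD('n)}"
      using rinj by (simp add: card_image)
    ultimately have "r ` UNIV = {..<CARD('n)}"
      by (intro card_subset_eq) auto
    then show ?thesis using rinj by (simp add: bij_betw_def)
  qed
  have nbij: "bij_betw ((!) L) {..<CARD('n)} UNIV"
    using bij_betw_nth[OF L(1)] lenL L(2) by simp
  define \<pi> where "\<pi> i = L ! r i" for i
  have pe: "\<pi> = (!) L \<circ> r" by (simp add: \<pi>_def fun_eq_iff)
  have "bij \<pi>"
    unfolding pe using bij_betw_trans[OF rbij nbij] by simp
  moreover have "f (\<pi> j) \<le> f (\<pi> i)" if "i \<le> j" for i j
  proof -
    have "(map (\<lambda>i. - f i) L) ! r i \<le> (map (\<lambda>i. - f i) L) ! r j"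
      using sorted_nth_mono[OF L(3), of "r i" "r j"] rmono[OF that] rbound lenL by auto
    then show ?thesis using rbound lenL by (simp add: \<pi>_def)
  qed
  ultimately show ?thesis by (intro exI[of _ \<pi>]) auto
qed

lemma greedy:
  fixes a w :: "'n::{finite,linorder} \<Rightarrow> real"
  assumes dec: "\<forall>i j. i \<le> j \<longrightarrow> a j \<le> a i" and a0: "\<forall>i. 0 \<le> a i"
    and w: "\<forall>i. 0 \<le> w i \<and> w i \<le> 1" and ws: "sum w UNIV \<le> real (card {..l})"
  shows "(\<Sum>i\<in>UNIV. a i * w i) \<le> sum a {..l}"
proof -
  have U: "UNIV = {..l} \<union> {l<..}" by auto
  have D: "{..l} \<inter> {l<..} = {}" by auto
  have s1: "(\<Sum>i\<in>{..l}. a i * (w i - 1)) \<le> (\<Sum>i\<in>{..l}. a l * (w i - 1))"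
  proof (rule sum_mono)
    fix i assume "i \<in> {..l}"
    then have "a l \<le> a i" using dec by auto
    moreover have "w i - 1 \<le> 0" using w by auto
    ultimately show "a i * (w i - 1) \<le> a l * (w i - 1)" by (simp add: mult_right_mono_neg)
  qed
  have s2: "(\<Sum>i\<in>{l<..}. a i * w i) \<le> (\<Sum>i\<in>{l<..}. a l * w i)"
  proof (rule sum_mono)
    fix i assume "i \<in> {l<..}"
    then have "a i \<le> a l" using dec by auto
    then show "a i * w i \<le> a l * w i" using w by (simp add: mult_right_mono)
  qed
  have "(\<Sum>i\<in>UNIV. a i * w i) - sum a {..l}
      = (\<Sum>i\<in>{..l}. a i * (w i - 1)) + (\<Sum>i\<in>{l<..}. a i * w i)"
    by (subst U, subst sum.union_disjoint[OF _ _ D], auto simp: algebra_simps sum_subtractf)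
  also have "\<dots> \<le> (\<Sum>i\<in>{..l}. a l * (w i - 1)) + (\<Sum>i\<in>{l<..}. a l * w i)"
    using s1 s2 by linarith
  also have "\<dots> = a l * (sum w UNIV - real (card {..l}))"
    by (subst U, subst sum.union_disjoint[OF _ _ D], auto simp: algebra_simps sum_subtractf sum_distrib_left)
  also have "\<dots> \<le> 0"
    using a0 ws by (simp add: mult_nonneg_nonpos)
  finally show ?thesis by simp
qed

lemma major_aux:
  fixes g b :: "'n::linorder \<Rightarrow> real"
  assumes "finite A" and dec: "\<forall>i j. i \<le> j \<longrightarrow> b j \<le> b i"
  shows "(\<forall>x\<in>A. 0 \<le> sum g {j\<in>A. j \<le> x}) \<longrightarrow> A \<noteq> {} \<longrightarrow> b (Max A) * sum g A \<le> (\<Sum>j\<in>A. b j * g j)"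
  using assms(1)
proof (induction A rule: finite_linorder_max_induct)
  case empty then show ?case by simp
next
  case (insert c A)
  show ?case
  proof (intro impI)
    assume H: "\<forall>x\<in>insert c A. 0 \<le> sum g {j \<in> insert c A. j \<le> x}"
    have cA: "c \<notin> A" using insert by auto
    show "b (Max (insert c A)) * sum g (insert c A) \<le> (\<Sum>j\<in>insert c A. b j * g j)"
    proof (cases "A = {}")
      case True then show ?thesis by simp
    next
      case False
      have Mx: "Max (insert c A) = c"
        using insert False by (intro Max_eqI) auto
      have eq: "{j \<in> insert c A. j \<le> x} = {j\<in>A. j \<le> x}" if "x \<in> A" for x
        using insert that by auto
      have IH: "b (Max A) * sum g A \<le> (\<Sum>j\<in>A. b j * g j)"
        using insert.IH H eq False by auto
      have MA: "Max A \<in> A" using False insert by simp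
      have "{j\<in>A. j \<le> Max A} = A" using insert by auto
      then have G: "0 \<le> sum g A" using H eq[OF MA] MA by auto
      have "b c \<le> b (Max A)" using dec insert MA by auto
      then have "b c * sum g A \<le> b (Max A) * sum g A" using G by (simp add: mult_right_mono)
      then show ?thesis using IH insert cA Mx by (simp add: distrib_left)
    qed
  qed
qed

lemma major:
  fixes g b :: "'n::{finite,linorder} \<Rightarrow> real"
  assumes G: "\<forall>l. 0 \<le> sum g {..l}" and dec: "\<forall>i j. i \<le> j \<longrightarrow> b j \<le> b i" and b0: "\<forall>i. 0 \<le> b i"
  shows "0 \<le> (\<Sum>j\<in>UNIV. b j * g j)"
proof -
  have e: "{j\<in>UNIV. j \<le> x} = {..x}" for x :: 'n by auto
  have "b (Max UNIV) * sum g UNIV \<le> (\<Sum>j\<in>UNIV. b j * g j)"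
  proof -
    have "\<forall>x\<in>UNIV. 0 \<le> sum g {j\<in>UNIV. j \<le> x}" using G by (simp only: e) simp
    then show ?thesis using major_aux[of "UNIV :: 'n set" b g] dec by simp
  qed
  moreover have "{..Max (UNIV::'n set)} = UNIV" by auto
  then have "0 \<le> sum g UNIV" using G by metis
  ultimately show ?thesis using b0 by (meson mult_nonneg_nonneg order_trans)
qed

lemma KL:
  fixes a s :: "'n::{finite,linorder} \<Rightarrow> real" and M :: "'n \<Rightarrow> 'n \<Rightarrow> real"
  assumes a0: "\<forall>i. 0 \<le> a i" and pi: "bij \<pi>" and adec: "\<forall>i j. i \<le> j \<longrightarrow> a (\<pi> j) \<le> a (\<pi> i)"
    and sdec: "\<forall>i j. i \<le> j \<longrightarrow> s j \<le> s i" and s0: "\<forall>i. 0 \<le> s i"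
    and M0: "\<forall>i j. 0 \<le> M i j" and row: "\<forall>i. (\<Sum>j\<in>UNIV. M i j) \<le> 1"
    and col: "\<forall>j. (\<Sum>i\<in>UNIV. M i j) \<le> 1"
  shows "(\<Sum>i\<in>UNIV. \<Sum>j\<in>UNIV. a i * s j * M i j) \<le> (\<Sum>k\<in>UNIV. a (\<pi> k) * s k)"
proof -
  define F where "F j = (\<Sum>i\<in>UNIV. a i * M i j)" for j
  define g where "g j = a (\<pi> j) - F j" for j
  have G: "0 \<le> sum g {..l}" for l
  proof -
    define w where "w i = (\<Sum>j\<in>{..l}. M i j)" for i
    have w: "0 \<le> w i \<and> w i \<le> 1" for i
    proof
      show "0 \<le> w i" unfolding w_def using M0 by (simp add: sum_nonneg)
      have "w i \<le> (\<Sum>j\<in>UNIV. M i j)" unfolding w_def using M0 by (intro sum_mono2) auto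
      then show "w i \<le> 1" using row by (meson order_trans)
    qed
    have ws: "sum w UNIV \<le> real (card {..l})"
    proof -
      have "sum w UNIV = (\<Sum>j\<in>{..l}. \<Sum>i\<in>UNIV. M i j)" unfolding w_def by (rule sum.swap)
      also have "\<dots> \<le> (\<Sum>j\<in>{..l}. 1)" using col by (intro sum_mono) auto
      finally show ?thesis by simp
    qed
    have reidx: "(\<Sum>i\<in>UNIV. h i) = (\<Sum>k\<in>UNIV. h (\<pi> k))" for h :: "'n \<Rightarrow> real"
      using sum.reindex_bij_betw[of \<pi> UNIV UNIV h] pi by (simp add: bij_def bij_betw_def)
    have "sum F {..l} = (\<Sum>i\<in>UNIV. a i * w i)"
      unfolding F_def w_def by (simp add: sum_distrib_left; rule sum.swap)
    also have "\<dots> = (\<Sum>k\<in>UNIV. a (\<pi> k) * w (\<pi> k))" by (rule reidx)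
    also have "\<dots> \<le> (\<Sum>k\<in>{..l}. a (\<pi> k))"
      by (rule greedy) (use adec a0 w ws reidx[of w] in auto)
    finally show ?thesis unfolding g_def by (simp add: sum_subtractf)
  qed
  have "0 \<le> (\<Sum>j\<in>UNIV. s j * g j)" by (rule major) (use G sdec s0 in auto)
  moreover have "(\<Sum>j\<in>UNIV. s j * F j) = (\<Sum>i\<in>UNIV. \<Sum>j\<in>UNIV. a i * s j * M i j)"
    unfolding F_def by (simp add: sum_distrib_left mult.commute mult.left_commute; rule sum.swap)
  ultimately show ?thesis unfolding g_def by (simp add: algebra_simps sum_subtractf mult.commute)
qed

lemma adj: fixes A :: "real^'n^'m" shows "(A *v x) \<bullet> y = x \<bullet> (transpose A *v y)"
  unfolding inner_vec_def matrix_vector_mult_def transpose_def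
  by (simp add: sum_distrib_left sum_distrib_right mult.commute mult.left_commute; rule sum.swap)

lemma spectral_aux:
  fixes A :: "real^'n^'n"
  assumes sym: "transpose A = A"
  shows "subspace S \<Longrightarrow> (\<forall>x\<in>S. A *v x \<in> S) \<Longrightarrow>
    \<exists>B. B \<subseteq> S \<and> pairwise orthogonal B \<and> (\<forall>x\<in>B. norm x = 1) \<and> (\<forall>x\<in>B. \<exists>\<mu>. A *v x = \<mu> *\<^sub>R x) \<and> card B = dim S"
proof (induction "dim S" arbitrary: S rule: less_induct)
  case less
  have symm: "x \<bullet> (A *v y) = (A *v x) \<bullet> y" for x y
    using adj[of A x y] sym by simp
  show ?case
  proof (cases "dim S = 0")
    case True
    show ?thesis
    proof (intro exI[of _ "{}"] conjI)
      show "card {} = dim S" using True by simp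
    qed (simp_all add: pairwise_empty)
  next
    case False
    then have "\<not> S \<subseteq> {0}" by simp
    then obtain x0 where x0: "x0 \<in> S" "x0 \<noteq> 0" by auto
    define K where "K = sphere (0::real^'n) 1 \<inter> S"
    have Kc: "compact K" unfolding K_def
      using closed_subspace[OF less.prems(1)] by (intro compact_Int_closed) auto
    have "x0 /\<^sub>R norm x0 \<in> K" unfolding K_def
      using x0 less.prems(1) by (auto simp: subspace_scale)
    then have Kne: "K \<noteq> {}" by auto
    define f where "f x = x \<bullet> (A *v x)" for x
    have bl: "bounded_linear (\<lambda>x. A *v x)"
      using matrix_vector_mul_linear linear_conv_bounded_linear by blast
    have fc: "continuous_on K f" unfolding f_def
      by (intro continuous_intros linear_continuous_on bl)
    obtain v where v: "v \<in> K" and vmax: "\<forall>y\<in>K. f y \<le> f v"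
      using continuous_attains_sup[OF Kc Kne fc] by blast
    define M where "M = f v"
    have vS: "v \<in> S" and vn: "norm v = 1" using v by (auto simp: K_def)
    have vv: "v \<bullet> v = 1" using vn by (simp add: norm_eq_1)
    have fscale: "f (c *\<^sub>R y) = c^2 * f y" for c y
      by (simp add: f_def power2_eq_square matrix_vector_mult_scaleR inner_scaleR_left inner_scaleR_right)
    have bound: "f y \<le> M * (y \<bullet> y)" if "y \<in> S" for y
    proof (cases "y = 0")
      case True then show ?thesis by (simp add: f_def)
    next
      case False
      have "(1 / norm y) *\<^sub>R y \<in> K" unfolding K_def
        using that False less.prems(1) by (auto simp: subspace_scale)
      then have "f ((1 / norm y) *\<^sub>R y) \<le> M" using vmax M_def by auto
      then have "(1 / norm y)^2 * f y \<le> M" by (simp add: fscale)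
      then have "f y \<le> M * (norm y)^2"
        using False by (simp add: field_simps power2_eq_square)
      then show ?thesis by (simp add: power2_norm_eq_inner)
    qed
    have perp: "w \<bullet> (A *v v) = 0" if wS: "w \<in> S" and wv: "w \<bullet> v = 0" for w
    proof -
      define c where "c = w \<bullet> (A *v v)"
      define d where "d = w \<bullet> (A *v w) - M * (w \<bullet> w)"
      have ineq: "2 * t * c + t^2 * d \<le> 0" for t
      proof -
        have "v + t *\<^sub>R w \<in> S" using wS vS less.prems(1) by (simp add: subspace_add subspace_scale)
        then have b: "f (v + t *\<^sub>R w) \<le> M * ((v + t *\<^sub>R w) \<bullet> (v + t *\<^sub>R w))" by (rule bound)
        have e1: "f (v + t *\<^sub>R w) = M + 2 * t * c + t^2 * (w \<bullet> (A *v w))"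
          using symm[of v w] unfolding f_def M_def c_def
          by (simp add: matrix_vector_right_distrib matrix_vector_mult_scaleR inner_add_left inner_add_right
              inner_scaleR_left inner_scaleR_right inner_commute power2_eq_square algebra_simps)
        have e2: "(v + t *\<^sub>R w) \<bullet> (v + t *\<^sub>R w) = 1 + t^2 * (w \<bullet> w)"
          using vv wv by (simp add: inner_add_left inner_add_right inner_commute power2_eq_square algebra_simps)
        have "M + 2 * t * c + t^2 * (w \<bullet> (A *v w)) \<le> M * (1 + t^2 * (w \<bullet> w))"
          using b e1 e2 by simp
        then show ?thesis unfolding d_def by (simp add: algebra_simps)
      qed
      define e where "e = \<bar>d\<bar> + 1"
      have e0: "e > 0" by (simp add: e_def)
      have "2 * (c / e) * c + (c / e)^2 * d \<le> 0" by (rule ineq)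
      then have "e^2 * (2 * (c / e) * c + (c / e)^2 * d) \<le> 0"
        by (simp add: mult_nonneg_nonpos)
      moreover have "e^2 * (2 * (c / e) * c + (c / e)^2 * d) = c^2 * (2 * e + d)"
        using e0 by (simp add: field_simps power2_eq_square)
      ultimately have "c^2 * (2 * e + d) \<le> 0" by simp
      moreover have "2 * e + d > 0" by (simp add: e_def) 
      ultimately have "c^2 \<le> 0" by (simp add: mult_le_0_iff)
      then show ?thesis unfolding c_def by simp
    qed
    have eig: "A *v v = M *\<^sub>R v"
    proof -
      define w where "w = A *v v - M *\<^sub>R v"
      have wS: "w \<in> S" unfolding w_def using less.prems vS by (simp add: subspace_diff subspace_scale)
      have Mv: "(A *v v) \<bullet> v = M" unfolding M_def f_def by (simp add: inner_commute)
      have wv: "w \<bullet> v = 0" unfolding w_def using Mv vv by (simp add: inner_diff_left)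
      have "w \<bullet> w = w \<bullet> (A *v v) - M * (w \<bullet> v)" unfolding w_def
        by (simp add: inner_diff_right)
      then have "w \<bullet> w = 0" using perp[OF wS wv] wv by simp
      then show ?thesis unfolding w_def by simp
    qed
    define S' where "S' = {y\<in>S. \<forall>x\<in>span {v}. orthogonal x y}"
    have S'_sub: "subspace S'"
    proof -
      have "S' = S \<inter> {y. \<forall>x\<in>span {v}. orthogonal x y}" unfolding S'_def by auto
      then show ?thesis using less.prems(1) by (metis subspace_inter subspace_orthogonal_to_vectors)
    qed
    have S'_mem: "y \<in> S' \<longleftrightarrow> y \<in> S \<and> v \<bullet> y = 0" for y
    proof
      assume "y \<in> S'" then show "y \<in> S \<and> v \<bullet> y = 0"
        unfolding S'_def by (auto simp: orthogonal_def span_base)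
    next
      assume H: "y \<in> S \<and> v \<bullet> y = 0"
      have "orthogonal y x" if "x \<in> span {v}" for x
        by (rule orthogonal_to_span[OF that]) (use H in \<open>auto simp: orthogonal_def inner_commute\<close>)
      then show "y \<in> S'" using H unfolding S'_def by (auto simp: orthogonal_commute)
    qed
    have spv: "span {v} \<subseteq> S" using vS less.prems(1) by (simp add: span_minimal)
    have "dim S' + dim (span {v}) = dim S"
      unfolding S'_def using dim_subspace_orthogonal_to_vectors[of "span {v}" S] less.prems(1) spv
      by (simp add: subspace_span)
    moreover have "dim (span {v}) = 1" using vn by auto
    ultimately have dimS': "dim S' + 1 = dim S" by simp
    have inv': "\<forall>x\<in>S'. A *v x \<in> S'"
    proof
      fix y assume y: "y \<in> S'"
      then have "A *v y \<in> S" "v \<bullet> y = 0" using less.prems S'_mem by auto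
      moreover have "v \<bullet> (A *v y) = 0" using symm[of v y] eig \<open>v \<bullet> y = 0\<close> by simp
      ultimately show "A *v y \<in> S'" using S'_mem by auto
    qed
    obtain B' where B': "B' \<subseteq> S'" "pairwise orthogonal B'" "\<forall>x\<in>B'. norm x = 1"
        "\<forall>x\<in>B'. \<exists>\<mu>. A *v x = \<mu> *\<^sub>R x" "card B' = dim S'"
      using less.hyps[of S'] dimS' S'_sub inv' by auto
    have vB': "v \<notin> B'" using B'(1) S'_mem vv by force
    have finB': "finite B'" using pairwise_orthogonal_imp_finite[OF B'(2)] .
    show ?thesis
    proof (intro exI[of _ "insert v B'"] conjI)
      show "insert v B' \<subseteq> S" using B'(1) vS S'_mem by auto
      show "pairwise orthogonal (insert v B')"
        by (rule pairwise_orthogonal_insert[OF B'(2)]) (use B'(1) S'_mem in \<open>auto simp: orthogonal_def\<close>)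
      show "\<forall>x\<in>insert v B'. norm x = 1" using B'(3) vn by auto
      show "\<forall>x\<in>insert v B'. \<exists>\<mu>. A *v x = \<mu> *\<^sub>R x" using B'(4) eig by auto
      show "card (insert v B') = dim S" using finB' vB' B'(5) dimS' by simp
    qed
  qed
qed

lemma spectral:
  fixes A :: "real^'n^'n"
  assumes sym: "transpose A = A"
  shows "\<exists>(q::'n \<Rightarrow> real^'n) \<mu>. (\<forall>i j. q i \<bullet> q j = (if i = j then 1 else 0)) \<and> (\<forall>i. A *v q i = \<mu> i *\<^sub>R q i)"
proof -
  obtain B where B: "pairwise orthogonal B" "\<forall>x\<in>B. norm x = 1"
      "\<forall>x\<in>B. \<exists>\<mu>. A *v x = \<mu> *\<^sub>R x" "card B = dim (UNIV :: (real^'n) set)"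
    using spectral_aux[OF sym, of UNIV] by auto
  have cB: "card B = CARD('n)" using B(4) by simp
  have finB: "finite B" using pairwise_orthogonal_imp_finite[OF B(1)] .
  obtain q where q: "bij_betw q (UNIV::'n set) B"
    using bij_betw_iff_card[of "UNIV::'n set" B] finB cB by auto
  have qB: "q i \<in> B" for i using q by (auto simp: bij_betw_def)
  have qi: "q i = q j \<Longrightarrow> i = j" for i j using q by (auto simp: bij_betw_def inj_on_def)
  have orth: "q i \<bullet> q j = (if i = j then 1 else 0)" for i j
  proof (cases "i = j")
    case True then show ?thesis using B(2) qB by (simp add: norm_eq_1)
  next
    case False
    then have "q i \<noteq> q j" using qi by blast
    then show ?thesis using B(1) qB False by (auto simp: pairwise_def orthogonal_def)
  qed
  have "\<forall>i. \<exists>\<mu>. A *v q i = \<mu> *\<^sub>R q i" using B(3) qB by auto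
  then obtain \<mu> where "\<forall>i. A *v q i = \<mu> i *\<^sub>R q i" by metis
  then show ?thesis using orth by (intro exI[of _ q] exI[of _ \<mu>]) auto
qed

lemma mul_diag: "(P ** Diag x) $ a $ k = P$a$k * x$k"
  by (simp add: matrix_matrix_mult_def Diag_def if_distrib[of "\<lambda>t. P$a$_ * t"] sum.delta cong: if_cong)

lemma orth_from_family:
  fixes u :: "'n::finite \<Rightarrow> real^'m"
  assumes "\<forall>i j. u i \<bullet> u j = (if i = j then 1 else 0)"
  shows "transpose (\<chi> a j. u j $ a) ** (\<chi> a j. u j $ a) = mat 1"
proof -
  have "(transpose ((\<chi> a j. u j $ a)::real^'n^'m) ** (\<chi> a j. u j $ a)) $ i $ j = u i \<bullet> u j" for i j
    by (simp add: matrix_matrix_mult_def transpose_def inner_vec_def)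
  then show ?thesis using assms by (simp add: vec_eq_iff mat_def)
qed

lemma svd_exists:
  fixes X :: "real^'n^'m"
  assumes card: "CARD('n) \<le> CARD('m)"
  shows "\<exists>P x Q. is_svd X P x Q"
proof -
  define A where "A = transpose X ** X"
  have sym: "transpose A = A" unfolding A_def by (simp add: matrix_transpose_mul)
  obtain q :: "'n \<Rightarrow> real^'n" and \<mu> where
    qo: "\<forall>i j. q i \<bullet> q j = (if i = j then 1 else 0)" and qe: "\<forall>i. A *v q i = \<mu> i *\<^sub>R q i"
    using spectral[OF sym] by blast
  have XX: "(X *v q i) \<bullet> (X *v q j) = (if i = j then \<mu> i else 0)" for i j
  proof -
    have "(X *v q i) \<bullet> (X *v q j) = q i \<bullet> (A *v q j)"
      by (simp add: adj A_def matrix_vector_mul_assoc)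
    also have "\<dots> = \<mu> j * (q i \<bullet> q j)" using qe by simp
    finally show ?thesis using qo by simp
  qed
  define s where "s i = norm (X *v q i)" for i
  define I where "I = {i. X *v q i \<noteq> 0}"
  define p where "p i = (1 / s i) *\<^sub>R (X *v q i)" for i
  have pI: "p i \<bullet> p j = (if i = j then 1 else 0)" if "i \<in> I" "j \<in> I" for i j
  proof (cases "i = j")
    case True
    then show ?thesis using that by (simp add: p_def s_def I_def dot_square_norm power2_eq_square)
  next
    case False then show ?thesis using XX[of i j] by (simp add: p_def)
  qed
  define Ps where "Ps = p ` I"
  define C where "C = {y \<in> UNIV. \<forall>z\<in>span Ps. orthogonal z y}"
  have Csub: "subspace C" unfolding C_def using subspace_orthogonal_to_vectors by simp
  have dimC: "dim C + dim (span Ps) = CARD('m)"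
    unfolding C_def using dim_subspace_orthogonal_to_vectors[of "span Ps" UNIV]
    by (simp add: subspace_span)
  have "dim (span Ps) \<le> card Ps" using dim_le_card[of "span Ps" Ps] by (simp add: Ps_def span_superset)
  also have "\<dots> \<le> card I" unfolding Ps_def by (rule card_image_le) simp
  finally have dPs: "dim (span Ps) \<le> card I" .
  obtain Bc where Bc: "Bc \<subseteq> C" "pairwise orthogonal Bc" "\<And>x. x \<in> Bc \<Longrightarrow> norm x = 1" "card Bc = dim C"
    using orthonormal_basis_subspace[OF Csub] by metis
  have finBc: "finite Bc" using pairwise_orthogonal_imp_finite[OF Bc(2)] .
  have cI: "card (UNIV - I) = CARD('n) - card I" by (simp add: card_Diff_subset)
  have "card (UNIV - I) \<le> card Bc" using cI dimC dPs Bc(4) card by linarith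
  then obtain g where g: "g ` (UNIV - I) \<subseteq> Bc" "inj_on g (UNIV - I)"
    using card_le_inj[of "UNIV - I" Bc] finBc by auto
  define pc where "pc i = (if i \<in> I then p i else g i)" for i
  have pco: "pc i \<bullet> pc j = (if i = j then 1 else 0)" for i j
  proof -
    have cross: "p i \<bullet> g j = 0" if "i \<in> I" "j \<notin> I" for i j
    proof -
      have "g j \<in> C" using g(1) Bc(1) that by auto
      moreover have "p i \<in> span Ps" using that by (simp add: Ps_def span_base)
      ultimately show ?thesis by (simp add: C_def orthogonal_def)
    qed
    show ?thesis
    proof (cases "i \<in> I"; cases "j \<in> I")
      assume "i \<in> I" "j \<in> I" then show ?thesis using pI by (simp add: pc_def)
    next
      assume "i \<in> I" "j \<notin> I" then show ?thesis using cross by (auto simp: pc_def)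
    next
      assume "i \<notin> I" "j \<in> I" then show ?thesis using cross[of j i] by (auto simp: pc_def inner_commute)
    next
      assume ij: "i \<notin> I" "j \<notin> I"
      show ?thesis
      proof (cases "i = j")
        case True then show ?thesis using ij g(1) Bc(3) by (auto simp: pc_def norm_eq_1)
      next
        case False
        then have "g i \<noteq> g j" using g(2) ij by (auto simp: inj_on_def)
        moreover have "g i \<in> Bc" "g j \<in> Bc" using ij g(1) by auto
        ultimately show ?thesis using ij Bc(2) False by (simp add: pc_def pairwise_def orthogonal_def)
      qed
    qed
  qed
  define P where "P = ((\<chi> a j. pc j $ a) :: real^'n^'m)"
  define Q where "Q = ((\<chi> a j. q j $ a) :: real^'n^'n)"
  define x where "x = (\<chi> i. s i)"
  have PP: "transpose P ** P = mat 1" unfolding P_def by (rule orth_from_family) (use pco in auto)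
  have QQ: "transpose Q ** Q = mat 1" unfolding Q_def by (rule orth_from_family) (use qo in auto)
  have QQ': "Q ** transpose Q = mat 1"
    using QQ orthogonal_matrix[of Q] by (simp add: orthogonal_matrix_def)
  have col: "X *v q j = s j *\<^sub>R pc j" for j
  proof (cases "j \<in> I")
    case True then show ?thesis by (simp add: pc_def p_def s_def I_def)
  next
    case False then show ?thesis by (simp add: pc_def s_def I_def)
  qed
  have XQ: "X ** Q = P ** Diag x"
  proof -
    have "(X ** Q) $ a $ j = (X *v q j) $ a" for a j
      by (simp add: matrix_matrix_mult_def matrix_vector_mult_def Q_def)
    then show ?thesis by (simp add: vec_eq_iff mul_diag col P_def x_def mult.commute)
  qed
  have "X = X ** (Q ** transpose Q)" using QQ' by simp
  also have "\<dots> = P ** Diag x ** transpose Q" by (simp add: matrix_mul_assoc XQ)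
  finally have "X = P ** Diag x ** transpose Q" .
  moreover have "\<forall>i. 0 \<le> x $ i" by (simp add: x_def s_def)
  ultimately show ?thesis using PP QQ unfolding is_svd_def by blast
qed

lemma nsq: "(norm (s::real^'n))^2 = (\<Sum>i\<in>UNIV. (s$i)^2)"
  unfolding power2_norm_eq_inner by (simp add: inner_vec_def power2_eq_square)

lemma ab_le: "(a::real) * b \<le> (a^2 + b^2) / 2"
proof -
  have "0 \<le> (a - b)^2" by simp
  then show ?thesis by (simp add: power2_eq_square algebra_simps)
qed

lemma norm_repr:
  fixes p :: "'i \<Rightarrow> real^'m" and q :: "'i \<Rightarrow> real^'k"
  assumes "finite I" "\<forall>i\<in>I. \<forall>j\<in>I. p i \<bullet> p j = (if i = j then 1 else 0)"
    "\<forall>i\<in>I. \<forall>j\<in>I. q i \<bullet> q j = (if i = j then 1 else 0)"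
  shows "(norm (\<Sum>i\<in>I. c i *\<^sub>R outer (p i) (q i)))^2 = (\<Sum>i\<in>I. (c i)^2)"
proof -
  have "(norm (\<Sum>i\<in>I. c i *\<^sub>R outer (p i) (q i)))^2 = (\<Sum>i\<in>I. \<Sum>j\<in>I. c i * c j * ((p i \<bullet> p j) * (q i \<bullet> q j)))"
    by (simp add: power2_norm_eq_inner inner_repr)
  also have "\<dots> = (\<Sum>i\<in>I. (c i)^2)"
  proof (rule sum.cong[OF refl])
    fix i assume i: "i \<in> I"
    have "(\<Sum>j\<in>I. c i * c j * ((p i \<bullet> p j) * (q i \<bullet> q j))) = (\<Sum>j\<in>I. if j = i then (c i)^2 else 0)"
      using assms(2,3) i by (intro sum.cong) (auto simp: power2_eq_square)
    then show "(\<Sum>j\<in>I. c i * c j * ((p i \<bullet> p j) * (q i \<bullet> q j))) = (c i)^2" using i assms(1) by simp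
  qed
  finally show ?thesis .
qed

lemma norm_svd:
  fixes U :: "real^'n^'m" and V :: "real^'n^'k"
  assumes "transpose U ** U = mat 1" "transpose V ** V = mat 1"
  shows "(norm (U ** Diag s ** transpose V))^2 = (\<Sum>i\<in>UNIV. (s$i)^2)"
  unfolding svd_repr by (rule norm_repr) (use orth_cols[OF assms(1)] orth_cols[OF assms(2)] in auto)

lemma nuc_le:
  fixes X P U :: "real^'n^'m" and Q V :: "real^'n^'n"
  assumes "is_svd X P x Q" "is_svd X U s V"
  shows "sum (\<lambda>i. x$i) UNIV \<le> sum (\<lambda>i. s$i) UNIV"
proof -
  have PP: "transpose P ** P = mat 1" and QQ: "transpose Q ** Q = mat 1" and UU: "transpose U ** U = mat 1"
    and VV: "transpose V ** V = mat 1" and s0: "\<forall>i. 0 \<le> s$i"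
    using assms by (auto simp: is_svd_def)
  define p where "p i = column i P" for i
  define q where "q i = column i Q" for i
  define u where "u i = column i U" for i
  define v where "v i = column i V" for i
  note op = orth_cols[OF PP, folded p_def] and oq = orth_cols[OF QQ, folded q_def]
    and ou = orth_cols[OF UU, folded u_def] and ov = orth_cols[OF VV, folded v_def]
  define W where "W = (\<Sum>i\<in>UNIV. (1::real) *\<^sub>R outer (p i) (q i))"
  have X1: "X = (\<Sum>i\<in>UNIV. x$i *\<^sub>R outer (p i) (q i))"
    using assms(1) by (simp add: is_svd_def svd_repr p_def q_def)
  have X2: "X = (\<Sum>j\<in>UNIV. s$j *\<^sub>R outer (u j) (v j))"
    using assms(2) by (simp add: is_svd_def svd_repr u_def v_def)
  have "X \<bullet> W = (\<Sum>i\<in>UNIV. \<Sum>j\<in>UNIV. x$i * 1 * ((p i \<bullet> p j) * (q i \<bullet> q j)))"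
    unfolding W_def by (subst X1, rule inner_repr)
  also have "\<dots> = (\<Sum>i\<in>UNIV. x$i)"
  proof (rule sum.cong[OF refl])
    fix i :: 'n
    have "(\<Sum>j\<in>UNIV. x$i * 1 * ((p i \<bullet> p j) * (q i \<bullet> q j))) = (\<Sum>j\<in>UNIV. if j = i then x$i else 0)"
      using op oq by (intro sum.cong) auto
    then show "(\<Sum>j\<in>UNIV. x$i * 1 * ((p i \<bullet> p j) * (q i \<bullet> q j))) = x$i" by simp
  qed
  finally have e1: "X \<bullet> W = (\<Sum>i\<in>UNIV. x$i)" .
  have "X \<bullet> W = (\<Sum>j\<in>UNIV. \<Sum>i\<in>UNIV. s$j * 1 * ((u j \<bullet> p i) * (v j \<bullet> q i)))"
    unfolding W_def by (subst X2, rule inner_repr)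
  also have "\<dots> \<le> (\<Sum>j\<in>UNIV. s$j * 1)"
  proof (rule sum_mono)
    fix j :: 'n
    have "(\<Sum>i\<in>UNIV. (u j \<bullet> p i) * (v j \<bullet> q i)) \<le> (\<Sum>i\<in>UNIV. ((u j \<bullet> p i)^2 + (v j \<bullet> q i)^2) / 2)"
      by (intro sum_mono ab_le)
    also have "\<dots> = ((\<Sum>i\<in>UNIV. (u j \<bullet> p i)^2) + (\<Sum>i\<in>UNIV. (v j \<bullet> q i)^2)) / 2"
      by (simp only: sum_divide_distrib[symmetric] sum.distrib)
    also have "\<dots> \<le> (u j \<bullet> u j + v j \<bullet> v j) / 2"
      using bessel[of UNIV p "u j"] bessel[of UNIV q "v j"] op oq by simp
    also have "\<dots> = 1" using ou ov by simp
    finally have "(\<Sum>i\<in>UNIV. (u j \<bullet> p i) * (v j \<bullet> q i)) \<le> 1" .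
    then have "s$j * (\<Sum>i\<in>UNIV. (u j \<bullet> p i) * (v j \<bullet> q i)) \<le> s$j * 1"
      using s0 by (intro mult_left_mono) auto
    then show "(\<Sum>i\<in>UNIV. s$j * 1 * ((u j \<bullet> p i) * (v j \<bullet> q i))) \<le> s$j * 1"
      by (simp add: sum_distrib_left)
  qed
  finally show ?thesis using e1 by simp
qed

lemma nuc_eq:
  fixes X U :: "real^'n^'m" and V :: "real^'n^'n"
  assumes "is_svd X U s V"
  shows "nuclear_norm X = sum (\<lambda>i. s$i) UNIV"
proof -
  have "\<exists>t. \<exists>U s V. is_svd X U s V \<and> t = (\<Sum>i\<in>UNIV. s $ i)" using assms by blast
  then have "\<exists>U' s' V'. is_svd X U' s' V' \<and> nuclear_norm X = (\<Sum>i\<in>UNIV. s' $ i)"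
    unfolding nuclear_norm_def by (rule someI_ex)
  then obtain U' s' V' where "is_svd X U' s' V'" "nuclear_norm X = (\<Sum>i\<in>UNIV. s' $ i)" by blast
  then show ?thesis using nuc_le[OF assms] nuc_le[of X U' s' V' U s V] assms by force
qed

lemma reidx: "bij \<pi> \<Longrightarrow> (\<Sum>k\<in>UNIV. h (\<pi> k)) = (\<Sum>i\<in>UNIV. (h i :: real))"
  using sum.reindex_bij_betw[of \<pi> UNIV UNIV h] by (simp add: bij_def bij_betw_def)

lemma inner_bound:
  fixes x \<sigma> :: "(real, 'n::{finite,linorder}) vec" and X P U :: "((real, 'n) vec, 'm::finite) vec" and Q V :: "((real, 'n) vec, 'n) vec"
  assumes svd: "is_svd X P x Q" and UU: "transpose U ** U = mat 1" and VV: "transpose V ** V = mat 1"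
    and sdec: "\<forall>i j. i \<le> j \<longrightarrow> \<sigma> $ j \<le> \<sigma> $ i" and s0: "\<forall>i. 0 \<le> \<sigma> $ i"
    and pi: "bij \<pi>" and xdec: "\<forall>i j. i \<le> j \<longrightarrow> x $ (\<pi> j) \<le> x $ (\<pi> i)"
  shows "X \<bullet> (U ** Diag \<sigma> ** transpose V) \<le> (\<Sum>k\<in>UNIV. x $ (\<pi> k) * \<sigma> $ k)"
proof -
  have PP: "transpose P ** P = mat 1" and QQ: "transpose Q ** Q = mat 1" and x0: "\<forall>i. 0 \<le> x$i"
    and XP: "X = P ** Diag x ** transpose Q"
    using svd by (auto simp: is_svd_def)
  define p where "p i = column i P" for i
  define q where "q i = column i Q" for i
  define u where "u i = column i U" for i
  define v where "v i = column i V" for i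
  note op = orth_cols[OF PP, folded p_def] and oq = orth_cols[OF QQ, folded q_def]
    and ou = orth_cols[OF UU, folded u_def] and ov = orth_cols[OF VV, folded v_def]
  define M where "M i j = ((p i \<bullet> u j)^2 + (q i \<bullet> v j)^2) / 2" for i j
  have "X \<bullet> (U ** Diag \<sigma> ** transpose V) = (\<Sum>i\<in>UNIV. \<Sum>j\<in>UNIV. x$i * \<sigma>$j * ((p i \<bullet> u j) * (q i \<bullet> v j)))"
    unfolding XP svd_repr p_def q_def u_def v_def by (rule inner_repr)
  also have "\<dots> \<le> (\<Sum>i\<in>UNIV. \<Sum>j\<in>UNIV. x$i * \<sigma>$j * M i j)"
    unfolding M_def using x0 s0 by (intro sum_mono mult_left_mono ab_le) auto
  also have "\<dots> \<le> (\<Sum>k\<in>UNIV. x $ (\<pi> k) * \<sigma> $ k)"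
  proof (rule KL[of "\<lambda>i. x$i" \<pi> "\<lambda>j. \<sigma>$j" M])
    show "\<forall>i j. 0 \<le> M i j" by (simp add: M_def)
    show "\<forall>i. (\<Sum>j\<in>UNIV. M i j) \<le> 1"
    proof
      fix i
      have "(\<Sum>j\<in>UNIV. M i j) = ((\<Sum>j\<in>UNIV. (p i \<bullet> u j)^2) + (\<Sum>j\<in>UNIV. (q i \<bullet> v j)^2)) / 2"
        unfolding M_def by (simp only: sum_divide_distrib[symmetric] sum.distrib)
      also have "\<dots> \<le> (p i \<bullet> p i + q i \<bullet> q i) / 2"
        using bessel[of UNIV u "p i"] bessel[of UNIV v "q i"] ou ov by simp
      also have "\<dots> = 1" using op oq by simp
      finally show "(\<Sum>j\<in>UNIV. M i j) \<le> 1" .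
    qed
    show "\<forall>j. (\<Sum>i\<in>UNIV. M i j) \<le> 1"
    proof
      fix j
      have "(\<Sum>i\<in>UNIV. M i j) = ((\<Sum>i\<in>UNIV. (u j \<bullet> p i)^2) + (\<Sum>i\<in>UNIV. (v j \<bullet> q i)^2)) / 2"
        unfolding M_def by (simp only: sum_divide_distrib[symmetric] sum.distrib inner_commute)
      also have "\<dots> \<le> (u j \<bullet> u j + v j \<bullet> v j) / 2"
        using bessel[of UNIV p "u j"] bessel[of UNIV q "v j"] op oq by simp
      also have "\<dots> = 1" using ou ov by simp
      finally show "(\<Sum>i\<in>UNIV. M i j) \<le> 1" .
    qed
  qed (use x0 pi xdec sdec s0 in auto)
  finally show ?thesis .
qed

lemma vec_obj_sum:
  "vec_obj lam \<sigma> s = (1/2) * (\<Sum>i\<in>UNIV. (s$i - \<sigma>$i)^2) + lam * ((\<Sum>i\<in>UNIV. \<bar>s$i\<bar>) - sqrt (\<Sum>i\<in>UNIV. (s$i)^2))"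
  by (simp add: vec_obj_def l2_norm_def l1_norm_def sum_nonneg)

lemma vec_exists_min:
  fixes \<sigma> :: "real^'n"
  assumes lam: "0 < lam"
  shows "\<exists>m. \<forall>t. vec_obj lam \<sigma> m \<le> vec_obj lam \<sigma> t"
proof -
  define f where "f = vec_obj lam \<sigma>"
  have fl: "f t \<ge> (1/2) * (norm (t - \<sigma>))^2" for t
  proof -
    have "norm t \<le> l1_norm t" unfolding l1_norm_def by (rule norm_le_l1_cart)
    then show ?thesis using lam unfolding f_def vec_obj_def l2_eq_norm by simp
  qed
  have f0: "f \<sigma> \<ge> 0"
  proof -
    have "norm \<sigma> \<le> l1_norm \<sigma>" unfolding l1_norm_def by (rule norm_le_l1_cart)
    then show ?thesis using lam unfolding f_def vec_obj_def l2_eq_norm by simp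
  qed
  have fc: "continuous_on UNIV f"
    unfolding f_def vec_obj_def l1_norm_def l2_eq_norm by (intro continuous_intros)
  define r where "r = sqrt (2 * f \<sigma>) + 1"
  have r0: "0 \<le> r" using f0 unfolding r_def by (simp add: add_nonneg_nonneg)
  have "compact (cball \<sigma> r)" by simp
  moreover have "cball \<sigma> r \<noteq> {}" using r0 by simp
  moreover have "continuous_on (cball \<sigma> r) f" using fc continuous_on_subset by blast
  ultimately have "\<exists>m\<in>cball \<sigma> r. \<forall>y\<in>cball \<sigma> r. f m \<le> f y"
    by (rule continuous_attains_inf)
  then obtain m where m: "m \<in> cball \<sigma> r" "\<forall>y\<in>cball \<sigma> r. f m \<le> f y" by blast
  have "f m \<le> f t" for t
  proof (cases "t \<in> cball \<sigma> r")
    case True then show ?thesis using m by auto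
  next
    case False
    then have d: "norm (t - \<sigma>) > r" by (simp add: dist_norm norm_minus_commute)
    have "r \<ge> sqrt (2 * f \<sigma>)" unfolding r_def by simp
    then have "norm (t - \<sigma>) > sqrt (2 * f \<sigma>)" using d by simp
    then have "(norm (t - \<sigma>))^2 > (sqrt (2 * f \<sigma>))^2"
      using f0 by (intro power_strict_mono) auto
    then have "(norm (t - \<sigma>))^2 > 2 * f \<sigma>" using f0 by simp
    then have "f t > f \<sigma>" using fl[of t] by simp
    moreover have "f m \<le> f \<sigma>" using m r0 by simp
    ultimately show ?thesis by simp
  qed
  then show ?thesis unfolding f_def by blast
qed

lemma vec_sorted_min:
  fixes \<sigma> :: "(real, 'n::{finite,linorder}) vec"
  assumes lam: "0 < lam" and sdec: "\<forall>i j. i \<le> j \<longrightarrow> \<sigma> $ j \<le> \<sigma> $ i" and s0: "\<forall>i. 0 \<le> \<sigma> $ i"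
  shows "\<exists>s. (\<forall>t. vec_obj lam \<sigma> s \<le> vec_obj lam \<sigma> t) \<and> (\<forall>i j. i \<le> j \<longrightarrow> s $ j \<le> s $ i) \<and> (\<forall>i. 0 \<le> s $ i)"
proof -
  obtain m where m: "\<forall>t. vec_obj lam \<sigma> m \<le> vec_obj lam \<sigma> t" using vec_exists_min[OF lam] by blast
  define a where "a = (\<chi> i. \<bar>m$i\<bar>)"
  obtain \<pi> :: "'n \<Rightarrow> 'n" where pi: "bij \<pi>" and pdec: "\<forall>i j. i \<le> j \<longrightarrow> a $ (\<pi> j) \<le> a $ (\<pi> i)"
    using sort_perm[of "\<lambda>i. a$i"] by blast
  define y where "y = (\<chi> k. a $ (\<pi> k))"
  have a0: "\<forall>i. 0 \<le> a$i" by (simp add: a_def)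
  have sq: "(\<Sum>i\<in>UNIV. (a$i - \<sigma>$i)^2) \<le> (\<Sum>i\<in>UNIV. (m$i - \<sigma>$i)^2)"
  proof (rule sum_mono)
    fix i
    have "m$i * \<sigma>$i \<le> \<bar>m$i\<bar> * \<sigma>$i" using s0 by (intro mult_right_mono) auto
    then show "(a$i - \<sigma>$i)^2 \<le> (m$i - \<sigma>$i)^2"
      by (simp add: a_def power2_diff)
  qed
  have am: "vec_obj lam \<sigma> a \<le> vec_obj lam \<sigma> m"
    using sq unfolding vec_obj_sum by (simp add: a_def)
  have KLd: "(\<Sum>i\<in>UNIV. a$i * \<sigma>$i) \<le> (\<Sum>k\<in>UNIV. a$(\<pi> k) * \<sigma>$k)"
  proof -
    have "(\<Sum>i\<in>UNIV. \<Sum>j\<in>UNIV. a$i * \<sigma>$j * (if i = j then 1 else 0)) \<le> (\<Sum>k\<in>UNIV. a$(\<pi> k) * \<sigma>$k)"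
      by (rule KL) (use a0 pi pdec sdec s0 in auto)
    moreover have "(\<Sum>i\<in>UNIV. \<Sum>j\<in>UNIV. a$i * \<sigma>$j * (if i = j then 1 else 0)) = (\<Sum>i\<in>UNIV. a$i * \<sigma>$i)"
      by (simp add: if_distrib cong: if_cong)
    ultimately show ?thesis by simp
  qed
  have e1: "(\<Sum>i\<in>UNIV. \<bar>y$i\<bar>) = (\<Sum>i\<in>UNIV. \<bar>a$i\<bar>)" unfolding y_def using reidx[OF pi, of "\<lambda>i. \<bar>a$i\<bar>"] by simp
  have e2: "(\<Sum>i\<in>UNIV. (y$i)^2) = (\<Sum>i\<in>UNIV. (a$i)^2)" unfolding y_def using reidx[OF pi, of "\<lambda>i. (a$i)^2"] by simp
  have ex: "(\<Sum>i\<in>UNIV. (w$i - \<sigma>$i)^2) = (\<Sum>i\<in>UNIV. (w$i)^2) - 2 * (\<Sum>i\<in>UNIV. w$i * \<sigma>$i) + (\<Sum>i\<in>UNIV. (\<sigma>$i)^2)" for w :: "(real, 'n) vec"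
    by (simp add: power2_diff sum.distrib sum_subtractf sum_distrib_left mult.assoc)
  have "(\<Sum>i\<in>UNIV. (y$i - \<sigma>$i)^2) \<le> (\<Sum>i\<in>UNIV. (a$i - \<sigma>$i)^2)"
    unfolding ex[of y] ex[of a] e2 using KLd by (simp add: y_def)
  then have "vec_obj lam \<sigma> y \<le> vec_obj lam \<sigma> a"
    unfolding vec_obj_sum e1 e2 by simp
  then have "\<forall>t. vec_obj lam \<sigma> y \<le> vec_obj lam \<sigma> t" using am m by (meson order_trans)
  moreover have "\<forall>i j. i \<le> j \<longrightarrow> y $ j \<le> y $ i" using pdec by (simp add: y_def)
  moreover have "\<forall>i. 0 \<le> y $ i" using a0 by (simp add: y_def)
  ultimately show ?thesis by blast
qed

lemma mat_obj_svd:
  fixes X P :: "((real, 'n::{finite,linorder}) vec, 'm::finite) vec" and Q :: "((real, 'n) vec, 'n) vec"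
    and U :: "((real, 'n) vec, 'm) vec" and V :: "((real, 'n) vec, 'n) vec"
  assumes svd: "is_svd X P x Q" and UU: "transpose U ** U = mat 1" and VV: "transpose V ** V = mat 1"
    and sdec: "\<forall>i j. i \<le> j \<longrightarrow> \<sigma> $ j \<le> \<sigma> $ i" and s0: "\<forall>i. 0 \<le> \<sigma> $ i"
    and Z: "Z = U ** Diag \<sigma> ** transpose V" and lam: "0 < lam"
  shows "\<exists>y. vec_obj lam \<sigma> y \<le> mat_obj lam Z X"
proof -
  have PP: "transpose P ** P = mat 1" and QQ: "transpose Q ** Q = mat 1" and x0: "\<forall>i. 0 \<le> x$i"
    and XP: "X = P ** Diag x ** transpose Q"
    using svd by (auto simp: is_svd_def)
  obtain \<pi> :: "'n \<Rightarrow> 'n" where pi: "bij \<pi>" and pdec: "\<forall>i j. i \<le> j \<longrightarrow> x $ (\<pi> j) \<le> x $ (\<pi> i)"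
    using sort_perm[of "\<lambda>i. x$i"] by blast
  define y where "y = (\<chi> k. x $ (\<pi> k))"
  have ib: "X \<bullet> Z \<le> (\<Sum>k\<in>UNIV. y$k * \<sigma>$k)"
    unfolding Z y_def using inner_bound[OF svd UU VV sdec s0 pi pdec] by simp
  have nX: "(norm X)^2 = (\<Sum>i\<in>UNIV. (x$i)^2)" unfolding XP by (rule norm_svd[OF PP QQ])
  have nZ: "(norm Z)^2 = (\<Sum>i\<in>UNIV. (\<sigma>$i)^2)" unfolding Z by (rule norm_svd[OF UU VV])
  have nuc: "nuclear_norm X = (\<Sum>i\<in>UNIV. x$i)" by (rule nuc_eq[OF svd])
  have e1: "(\<Sum>i\<in>UNIV. \<bar>y$i\<bar>) = (\<Sum>i\<in>UNIV. x$i)"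
    unfolding y_def using reidx[OF pi, of "\<lambda>i. \<bar>x$i\<bar>"] x0 by simp
  have e2: "(\<Sum>i\<in>UNIV. (y$i)^2) = (\<Sum>i\<in>UNIV. (x$i)^2)"
    unfolding y_def using reidx[OF pi, of "\<lambda>i. (x$i)^2"] by simp
  have ex: "(\<Sum>i\<in>UNIV. (y$i - \<sigma>$i)^2) = (\<Sum>i\<in>UNIV. (y$i)^2) - 2 * (\<Sum>i\<in>UNIV. y$i * \<sigma>$i) + (\<Sum>i\<in>UNIV. (\<sigma>$i)^2)"
    by (simp add: power2_diff sum.distrib sum_subtractf sum_distrib_left mult.assoc)
  have nd: "(norm (X - Z))^2 = (norm X)^2 - 2 * (X \<bullet> Z) + (norm Z)^2"
    by (simp add: power2_norm_eq_inner inner_diff_left inner_diff_right inner_commute)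
  have sq: "sqrt (\<Sum>i\<in>UNIV. (x$i)^2) = norm X"
    using nX by (metis norm_ge_zero real_sqrt_abs abs_of_nonneg)
  have "vec_obj lam \<sigma> y \<le> mat_obj lam Z X"
    unfolding vec_obj_sum mat_obj_def frob_eq_norm nuc ex e1 e2 nd nX nZ sq
    using ib lam by simp
  then show ?thesis by blast
qed

lemma mat_obj_at:
  fixes U :: "((real, 'n::{finite,linorder}) vec, 'm::finite) vec" and V :: "((real, 'n) vec, 'n) vec"
  assumes UU: "transpose U ** U = mat 1" and VV: "transpose V ** V = mat 1"
    and Z: "Z = U ** Diag \<sigma> ** transpose V" and s0: "\<forall>i. 0 \<le> s $ i"
  shows "mat_obj lam Z (U ** Diag s ** transpose V) = vec_obj lam \<sigma> s"
proof -
  have svd: "is_svd (U ** Diag s ** transpose V) U s V" using UU VV s0 by (simp add: is_svd_def)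
  have diff: "U ** Diag s ** transpose V - Z = U ** Diag (s - \<sigma>) ** transpose V"
    unfolding Z svd_repr by (simp add: sum_subtractf scaleR_diff_left)
  have n1: "(norm (U ** Diag s ** transpose V - Z))^2 = (\<Sum>i\<in>UNIV. (s$i - \<sigma>$i)^2)"
    unfolding diff norm_svd[OF UU VV] by simp
  have n2: "norm (U ** Diag s ** transpose V) = sqrt (\<Sum>i\<in>UNIV. (s$i)^2)"
    using norm_svd[OF UU VV, of s] by (metis norm_ge_zero real_sqrt_abs abs_of_nonneg)
  show ?thesis
    unfolding mat_obj_def vec_obj_sum frob_eq_norm n1 n2 nuc_eq[OF svd] using s0 by simp
qed

theorem proposition2:
  fixes Z U :: "((real, 'n::{finite,linorder}) vec, 'm::finite) vec"
    and V :: "((real, 'n) vec, 'n) vec" and sigma :: "(real, 'n) vec" and lam :: real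
  assumes "card (UNIV::'n set) \<le> card (UNIV::'m set)"
    and "transpose U ** U = mat 1"
    and "transpose V ** V = mat 1"
    and "\<forall>i j. i \<le> j \<longrightarrow> sigma $ j \<le> sigma $ i"
    and "\<forall>i. 0 \<le> sigma $ i"
    and "Z = U ** Diag sigma ** transpose V"
    and "0 < lam" and "lam \<le> sigma $ (LEAST i. True)"
  shows "(\<exists>s. (\<forall>t. vec_obj lam sigma s \<le> vec_obj lam sigma t)
              \<and> (\<forall>i j. i \<le> j \<longrightarrow> s $ j \<le> s $ i) \<and> (\<forall>i. 0 \<le> s $ i))
    \<and> (\<forall>s. (\<forall>t. vec_obj lam sigma s \<le> vec_obj lam sigma t)
              \<and> (\<forall>i j. i \<le> j \<longrightarrow> s $ j \<le> s $ i) \<and> (\<forall>i. 0 \<le> s $ i)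
           \<longrightarrow> (\<forall>X. mat_obj lam Z (U ** Diag s ** transpose V) \<le> mat_obj lam Z X))
    \<and> (INF s. vec_obj lam sigma s) = (INF X. mat_obj lam Z X)"
proof -
  note card = assms(1) and UU = assms(2) and VV = assms(3) and sdec = assms(4) and s0 = assms(5)
    and Z = assms(6) and lam = assms(7)
  have P1: "\<exists>s. (\<forall>t. vec_obj lam sigma s \<le> vec_obj lam sigma t)
              \<and> (\<forall>i j. i \<le> j \<longrightarrow> s $ j \<le> s $ i) \<and> (\<forall>i. 0 \<le> s $ i)"
    by (rule vec_sorted_min[OF lam sdec s0])
  have P2: "mat_obj lam Z (U ** Diag s ** transpose V) \<le> mat_obj lam Z X"
    if smin: "\<forall>t. vec_obj lam sigma s \<le> vec_obj lam sigma t" and sn: "\<forall>i. 0 \<le> s $ i" for s X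
  proof -
    obtain P x Q where svd: "is_svd X P x Q" using svd_exists[of X] card by auto
    obtain y where y: "vec_obj lam sigma y \<le> mat_obj lam Z X"
      using mat_obj_svd[OF svd UU VV sdec s0 Z lam] by blast
    have "mat_obj lam Z (U ** Diag s ** transpose V) = vec_obj lam sigma s"
      by (rule mat_obj_at[OF UU VV Z sn])
    also have "\<dots> \<le> vec_obj lam sigma y" using smin by blast
    finally show ?thesis using y by simp
  qed
  obtain s where s: "\<forall>t. vec_obj lam sigma s \<le> vec_obj lam sigma t" "\<forall>i. 0 \<le> s $ i"
    using P1 by blast
  have I1: "(INF t. vec_obj lam sigma t) = vec_obj lam sigma s"
    by (rule cInf_eq_minimum) (use s in auto)
  have I2: "(INF X. mat_obj lam Z X) = mat_obj lam Z (U ** Diag s ** transpose V)"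
    by (rule cInf_eq_minimum) (use P2[OF s] in auto)
  have "mat_obj lam Z (U ** Diag s ** transpose V) = vec_obj lam sigma s"
    by (rule mat_obj_at[OF UU VV Z s(2)])
  then have P3: "(INF s. vec_obj lam sigma s) = (INF X. mat_obj lam Z X)" using I1 I2 by simp
  show ?thesis
  proof (intro conjI)
    show "\<exists>s. (\<forall>t. vec_obj lam sigma s \<le> vec_obj lam sigma t)
              \<and> (\<forall>i j. i \<le> j \<longrightarrow> s $ j \<le> s $ i) \<and> (\<forall>i. 0 \<le> s $ i)" by (rule P1)
    show "\<forall>s. (\<forall>t. vec_obj lam sigma s \<le> vec_obj lam sigma t)
              \<and> (\<forall>i j. i \<le> j \<longrightarrow> s $ j \<le> s $ i) \<and> (\<forall>i. 0 \<le> s $ i)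
           \<longrightarrow> (\<forall>X. mat_obj lam Z (U ** Diag s ** transpose V) \<le> mat_obj lam Z X)"
    proof (intro allI impI)
      fix s X assume H: "(\<forall>t. vec_obj lam sigma s \<le> vec_obj lam sigma t)
              \<and> (\<forall>i j. i \<le> j \<longrightarrow> s $ j \<le> s $ i) \<and> (\<forall>i. 0 \<le> s $ i)"
      show "mat_obj lam Z (U ** Diag s ** transpose V) \<le> mat_obj lam Z X"
        by (rule P2) (use H in auto)
    qed
    show "(INF s. vec_obj lam sigma s) = (INF X. mat_obj lam Z X)" by (rule P3)
  qed
qed

end
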